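(* Let $m \ge n$ and let $\mathbf{A} \in \mathbb{R}^{m\times n}$ have rank $n$. Let $\mathbf{A} = \mathbf{Q}\mathbf{R}$ be its reduced QR decomposition, with $\mathbf{Q} \in \mathbb{R}^{m\times n}$ satisfying $\mathbf{Q}^T\mathbf{Q} = \mathbf{I}_n$ and $\mathbf{R}\in\mathbb{R}^{n\times n}$ upper triangular (hence invertible). Suppose $\mathbf{A}' \mapsto (\mathbf{Q}(\mathbf{A}'),\mathbf{R}(\mathbf{A}'))$ is a differentiable map, defined on a neighborhood of $\mathbf{A}$, giving such a decomposition $\mathbf{A}'=\mathbf{Q}(\mathbf{A}')\mathbf{R}(\mathbf{A}')$ for every $\mathbf{A}'$ in that neighborhood (e.g. the QR decomposition normalized so that $\mathbf{R}$ has positive diagonal). Let $\bar{\mathbf{Q}}\in\mathbb{R}^{m\times n}$ and $\bar{\mathbf{R}}\in\mathbb{R}^{n\times n}$ be arbitrary (upstream gradients). Then the reverse-mode gradient of $\mathbf{A}$ is $$\bar{\mathbf{A}} = \left[\bar{\mathbf{Q}} + \mathbf{Q}\,\mathrm{copyltu}(\mathbf{M})\right]\mathbf{R}^{-T},\qquad \mathbf{M} = \mathbf{R}\bar{\mathbf{R}}^T - \bar{\mathbf{Q}}^T\mathbf{Q}.$$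
   Context: Reverse-mode gradient: given a differentiable map $\mathbf{A}\mapsto(\mathbf{Q}(\mathbf{A}),\mathbf{R}(\mathbf{A}))$ and upstream matrices $\bar{\mathbf{Q}},\bar{\mathbf{R}}$ of the same shapes as $\mathbf{Q},\mathbf{R}$, the gradient $\bar{\mathbf{A}}$ is the unique matrix of the shape of $\mathbf{A}$ such that $\mathrm{Tr}(\bar{\mathbf{A}}^T d\mathbf{A}) = \mathrm{Tr}(\bar{\mathbf{Q}}^T d\mathbf{Q}) + \mathrm{Tr}(\bar{\mathbf{R}}^T d\mathbf{R})$ for every direction $d\mathbf{A}$, where $d\mathbf{Q}, d\mathbf{R}$ are the directional derivatives of $\mathbf{Q},\mathbf{R}$ at $\mathbf{A}$ in direction $d\mathbf{A}$. For a square matrix $\mathbf{M}$, $\mathrm{copyltu}(\mathbf{M})$ is the symmetric matrix with entries $\mathrm{copyltu}(\mathbf{M})_{ij} = \mathbf{M}_{\max(i,j),\min(i,j)}$ (the lower triangle of $\mathbf{M}$ copied to the upper triangle); equivalently $\mathrm{copyltu}(\mathbf{M}) = \mathrm{sym}(\mathbf{M}\circ\mathbf{E})$, where $\mathrm{sym}(\mathbf{B}) = (\mathbf{B}+\mathbf{B}^T)/2$, $\circ$ is the entrywise (Hadamard) product, and $\mathbf{E}$ is the matrix with $e_{ij}=0$ if $i<j$, $e_{ij}=1$ if $i=j$, $e_{ij}=2$ if $i>j$. $\mathbf{R}^{-T}$ denotes $(\mathbf{R}^{-1})^T$. *)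

theory Defs
  imports "HOL-Analysis.Analysis"
begin

text \<open>Matrices are rendered as real^'n^'m (m rows indexed by 'm, n columns indexed by 'n).
  The column index type carries a linear order, identifying it with {1..n}.\<close>

definition upper_triangular :: "real^('n::{finite,linorder})^('n::{finite,linorder}) \<Rightarrow> bool" where
  "upper_triangular R \<longleftrightarrow> (\<forall>i j. j < i \<longrightarrow> R $ i $ j = 0)"

definition copyltu :: "real^('n::{finite,linorder})^('n::{finite,linorder}) \<Rightarrow> real^('n::{finite,linorder})^('n::{finite,linorder})" where
  "copyltu M = (\<chi> i j. M $ (max i j) $ (min i j))"

end

theory Submission imports Defs begin

lemma bb_mult: "bounded_bilinear ((**) :: real^'n^'m \<Rightarrow> real^'p^'n \<Rightarrow> real^'p^'m)"
  unfolding bilinear_conv_bounded_bilinear[symmetric] bilinear_def linear_iff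
  by (auto simp: vec_eq_iff matrix_matrix_mult_def sum.distrib sum_distrib_left algebra_simps)

lemma bl_transpose: "bounded_linear (transpose :: real^'n^'m \<Rightarrow> real^'m^'n)"
  unfolding linear_conv_bounded_linear[symmetric] linear_iff
  by (auto simp: transpose_def vec_eq_iff)

lemma perm_lt:
  fixes p :: "'n::{finite,linorder} \<Rightarrow> 'n"
  assumes p: "p permutes UNIV" and "p \<noteq> id"
  shows "\<exists>i. p i < i"
proof (rule ccontr)
  assume "\<not> ?thesis"
  then have ge: "\<And>i. i \<le> p i" by (auto simp: not_less)
  let ?D = "{k. p k \<noteq> k}"
  have ne: "?D \<noteq> {}" using \<open>p \<noteq> id\<close> by auto
  define i where "i = Max ?D"
  have iD: "i \<in> ?D" unfolding i_def using ne by (intro Max_in) auto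
  then have lt: "i < p i" using ge[of i] by auto
  have "p i \<notin> ?D" proof
    assume "p i \<in> ?D" then have "p i \<le> i" unfolding i_def by (intro Max_ge) auto
    with lt show False by simp
  qed
  then have "p (p i) = p i" by simp
  then have "p i = i" using permutes_inj[OF p] by (meson injD)
  with lt show False by simp
qed

lemma det_upper_lin:
  fixes A :: "real^('n::{finite,linorder})^('n::{finite,linorder})"
  assumes ld: "\<And>i j. i > j \<Longrightarrow> A$i$j = 0"
  shows "det A = prod (\<lambda>i. A$i$i) (UNIV:: 'n set)"
proof -
  let ?U = "UNIV:: 'n set"
  let ?PU = "{p. p permutes ?U}"
  let ?pp = "(\<lambda>p. of_int (sign p) * prod (\<lambda>i. A$i$p i) (UNIV :: 'n set))"
  have fU: "finite ?U"
    by simp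
  have id0: "{id} \<subseteq> ?PU"
    by (auto simp: permutes_id)
  have p0: "\<forall>p \<in> ?PU -{id}. ?pp p = 0"
  proof
    fix p
    assume p: "p \<in> ?PU - {id}"
    then obtain i where i: "p i < i"
      using perm_lt by blast
    from ld[OF i] have "\<exists>i \<in> ?U. A$i$p i = 0"
      by blast
    with prod_zero[OF fU]  show "?pp p = 0"
      by force
  qed
  from sum.mono_neutral_cong_left[OF finite_permutations[OF fU] id0 p0] show ?thesis
    unfolding det_def by (simp add: sign_id)
qed

lemma upper_mult:
  fixes A B :: "real^('n::{finite,linorder})^('n::{finite,linorder})"
  assumes "upper_triangular A" "upper_triangular B"
  shows "upper_triangular (A ** B)"
  using assms unfolding upper_triangular_def matrix_matrix_mult_def
  by (auto intro!: sum.neutral) (metis mult_eq_0_iff not_le order.strict_trans1)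

lemma upper_inv:
  fixes R Ri :: "real^('n::{finite,linorder})^('n::{finite,linorder})"
  assumes U: "upper_triangular R" and inv: "R ** Ri = mat 1" and d: "det R \<noteq> 0"
  shows "upper_triangular Ri"
proof -
  have diag: "R $ i $ i \<noteq> 0" for i
    using d det_upper_lin[of R] U unfolding upper_triangular_def by auto
  show ?thesis unfolding upper_triangular_def
  proof (intro allI impI, rule ccontr)
    fix i j assume ji: "j < i" and nz: "Ri $ i $ j \<noteq> 0"
    let ?D = "{k. j < k \<and> Ri $ k $ j \<noteq> 0}"
    define k where "k = Max ?D"
    have kD: "k \<in> ?D" unfolding k_def using ji nz by (intro Max_in) auto
    have mx: "l > k \<Longrightarrow> Ri $ l $ j = 0" for l
      using Max_ge[of ?D l] kD unfolding k_def[symmetric] by force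
    have "(R ** Ri) $ k $ j = (\<Sum>l\<in>UNIV. R $ k $ l * Ri $ l $ j)"
      by (simp add: matrix_matrix_mult_def)
    also have "\<dots> = R $ k $ k * Ri $ k $ j + (\<Sum>l\<in>UNIV-{k}. R $ k $ l * Ri $ l $ j)"
      by (simp add: sum.remove[of UNIV k])
    also have "(\<Sum>l\<in>UNIV-{k}. R $ k $ l * Ri $ l $ j) = 0"
    proof (rule sum.neutral)
      have "R $ k $ l * Ri $ l $ j = 0" if "l \<noteq> k" for l
      proof -
        from that consider "l < k" | "l > k" by fastforce
        then show ?thesis
          by cases (use U mx in \<open>auto simp: upper_triangular_def\<close>)
      qed
      then show "\<forall>l\<in>UNIV-{k}. R $ k $ l * Ri $ l $ j = 0" by blast
    qed
    finally have "(R ** Ri) $ k $ j = R $ k $ k * Ri $ k $ j" by simp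
    moreover have "(R ** Ri) $ k $ j = 0" using inv kD by (auto simp: mat_def)
    ultimately show False using diag[of k] kD by simp
  qed
qed

lemmas mrd = bounded_bilinear.add_left[OF bb_mult]
lemmas mld = bounded_bilinear.add_right[OF bb_mult]
lemmas mrd_diff = bounded_bilinear.diff_left[OF bb_mult]
lemmas mld_diff = bounded_bilinear.diff_right[OF bb_mult]
lemma tr_add: "transpose (A + B) = transpose A + transpose (B::real^'n^'m)"
  by (simp add: transpose_def vec_eq_iff)

lemma copyltu_sym: "transpose (copyltu M) = copyltu M"
  by (simp add: copyltu_def transpose_def vec_eq_iff max.commute min.commute)

lemma trace_transpose': "trace (transpose A) = trace (A::real^'n^'n)"
  by (simp add: trace_def transpose_def)

lemma trace_copyltu:
  fixes M U :: "real^('n::{finite,linorder})^('n::{finite,linorder})"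
  assumes "upper_triangular U"
  shows "trace (copyltu M ** U) = trace (M ** U)"
  unfolding trace_def matrix_matrix_mult_def
proof (intro sum.cong refl)
  fix i k :: 'n
  show "(\<chi> i j. \<Sum>k\<in>UNIV. copyltu M $ i $ k * U $ k $ j) $ k $ k = (\<chi> i j. \<Sum>k\<in>UNIV. M $ i $ k * U $ k $ j) $ k $ k"
    apply simp
    apply (rule sum.cong, rule refl)
    subgoal for l using assms by (cases "l \<le> k") (auto simp: copyltu_def upper_triangular_def max_def min_def)
    done
qed

lemma alg:
  fixes Q Qbar dQ :: "real^('n::{finite,linorder})^('m::finite)"
    and R Rbar dR Ri :: "real^('n::{finite,linorder})^('n::{finite,linorder})"
  assumes QQ: "transpose Q ** Q = mat 1" and RRi: "R ** Ri = mat 1" and RiR: "Ri ** R = mat 1"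
    and skew: "transpose Q ** dQ + transpose dQ ** Q = 0"
    and udR: "upper_triangular dR" and uRi: "upper_triangular Ri"
  shows "trace (transpose ((Qbar + Q ** copyltu (R ** transpose Rbar - transpose Qbar ** Q)) ** transpose Ri)
           ** (Q ** dR + dQ ** R)) = trace (transpose Qbar ** dQ) + trace (transpose Rbar ** dR)"
proof -
  define M where "M = R ** transpose Rbar - transpose Qbar ** Q"
  define C where "C = copyltu M"
  define U where "U = dR ** Ri"
  define X where "X = transpose Q ** dQ"
  define P where "P = transpose Qbar + C ** transpose Q"
  have Ct: "transpose C = C" unfolding C_def by (rule copyltu_sym)
  have uU: "upper_triangular U" unfolding U_def using udR uRi by (rule upper_mult)
  have Xt: "transpose X = - X"
  proof -
    have "transpose X = transpose dQ ** Q" unfolding X_def by (simp add: matrix_transpose_mul)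
    then show ?thesis using skew unfolding X_def by (simp add: eq_neg_iff_add_eq_0 add.commute)
  qed
  have trCX: "trace (C ** X) = 0"
  proof -
    have "trace (C ** X) = trace (transpose (C ** X))" by (simp only: trace_transpose')
    also have "\<dots> = trace (transpose X ** C)" by (simp only: matrix_transpose_mul Ct)
    also have "\<dots> = - trace (X ** C)" unfolding Xt by (simp add: trace_def matrix_matrix_mult_def sum_negf)
    also have "\<dots> = - trace (C ** X)" using trace_mul_sym[of X C] by simp
    finally show ?thesis by simp
  qed
  have dAR: "(Q ** dR + dQ ** R) ** Ri = Q ** U + dQ"
    by (simp only: U_def mrd matrix_mul_assoc[symmetric] RRi matrix_mul_rid)
  have tA: "transpose ((Qbar + Q ** C) ** transpose Ri) = Ri ** P"
    by (simp only: P_def matrix_transpose_mul transpose_transpose tr_add Ct)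
  have PQ: "P ** Q = transpose Qbar ** Q + C"
    by (simp only: P_def mrd matrix_mul_assoc[symmetric] QQ matrix_mul_rid)
  have PdQ: "P ** dQ = transpose Qbar ** dQ + C ** X"
    by (simp only: P_def mrd X_def matrix_mul_assoc[symmetric])
  have "trace ((Ri ** P) ** (Q ** dR + dQ ** R)) = trace (P ** ((Q ** dR + dQ ** R) ** Ri))"
    by (metis matrix_mul_assoc trace_mul_sym)
  also have "\<dots> = trace (P ** (Q ** U + dQ))" by (simp only: dAR)
  also have "\<dots> = trace ((transpose Qbar ** Q) ** U) + trace (C ** U) + trace (transpose Qbar ** dQ) + trace (C ** X)"
    by (simp only: mld matrix_mul_assoc PQ PdQ mrd trace_add)
  also have "\<dots> = trace ((transpose Qbar ** Q) ** U) + trace (M ** U) + trace (transpose Qbar ** dQ)"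
    by (simp add: trCX trace_copyltu[OF uU, of M, folded C_def])
  also have "\<dots> = trace ((R ** transpose Rbar) ** U) + trace (transpose Qbar ** dQ)"
    by (simp add: M_def mrd_diff trace_sub)
  also have "trace ((R ** transpose Rbar) ** U) = trace (transpose Rbar ** dR)"
  proof -
    have "dR = U ** R" by (simp only: U_def matrix_mul_assoc[symmetric] RiR matrix_mul_rid)
    then show ?thesis by (metis matrix_mul_assoc trace_mul_sym)
  qed
  finally show ?thesis unfolding M_def[symmetric] C_def[symmetric] tA by simp
qed


theorem proposition1:
  fixes A Qbar :: "real^('n::{finite,linorder})^('m::finite)"
    and Rbar :: "real^('n::{finite,linorder})^('n::{finite,linorder})"
    and Qf :: "real^('n::{finite,linorder})^('m::finite) \<Rightarrow> real^('n::{finite,linorder})^('m::finite)"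
    and Rf :: "real^('n::{finite,linorder})^('m::finite) \<Rightarrow> real^('n::{finite,linorder})^('n::{finite,linorder})"
    and dQ :: "real^('n::{finite,linorder})^('m::finite) \<Rightarrow> real^('n::{finite,linorder})^('m::finite)"
    and dR :: "real^('n::{finite,linorder})^('m::finite) \<Rightarrow> real^('n::{finite,linorder})^('n::{finite,linorder})"
    and S :: "(real^('n::{finite,linorder})^('m::finite)) set"
  assumes "card (UNIV :: 'n set) \<le> card (UNIV :: 'm set)"
    and "rank A = card (UNIV :: 'n set)"
    and "open S" and "A \<in> S"
    and "\<forall>A'\<in>S. A' = Qf A' ** Rf A' \<and> transpose (Qf A') ** Qf A' = mat 1
                 \<and> upper_triangular (Rf A')"
    and "(Qf has_derivative dQ) (at A)"
    and "(Rf has_derivative dR) (at A)"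
  shows "let Q = Qf A; R = Rf A;
             M = R ** transpose Rbar - transpose Qbar ** Q;
             Abar = (Qbar + Q ** copyltu M) ** transpose (matrix_inv R)
         in \<forall>dA. trace (transpose Abar ** dA)
                 = trace (transpose Qbar ** dQ dA) + trace (transpose Rbar ** dR dA)"
proof -
  note hS = assms(5) and oS = assms(3) and AS = assms(4) and dQd = assms(6) and dRd = assms(7)
  define Q where "Q = Qf A"
  define R where "R = Rf A"
  have QR: "A = Q ** R" and QQ: "transpose Q ** Q = mat 1" and UR: "upper_triangular R"
    using hS AS unfolding Q_def R_def by auto
  have dprod: "((\<lambda>x. Qf x ** Rf x) has_derivative (\<lambda>h. Qf A ** dR h + dQ h ** Rf A)) (at A)"
    using bounded_bilinear.FDERIV[OF bb_mult dQd dRd] .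
  have did: "((\<lambda>x. Qf x ** Rf x) has_derivative (\<lambda>h. h)) (at A)"
    by (rule has_derivative_transform_within_open[OF has_derivative_ident oS AS]) (use hS in auto)
  have dAeq: "(\<lambda>h. Q ** dR h + dQ h ** R) = (\<lambda>h. h)"
    using has_derivative_unique[OF dprod did] unfolding Q_def R_def .
  have dtr: "((\<lambda>x. transpose (Qf x)) has_derivative (\<lambda>h. transpose (dQ h))) (at A)"
    using bounded_linear.has_derivative[OF bl_transpose dQd] .
  have dQQ: "((\<lambda>x. transpose (Qf x) ** Qf x) has_derivative (\<lambda>h. transpose Q ** dQ h + transpose (dQ h) ** Q)) (at A)"
    using bounded_bilinear.FDERIV[OF bb_mult dtr dQd] unfolding Q_def .
  have dQQ0: "((\<lambda>x. transpose (Qf x) ** Qf x) has_derivative (\<lambda>h. 0)) (at A)"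
    by (rule has_derivative_transform_within_open[OF has_derivative_const[of "mat 1"] oS AS]) (use hS in auto)
  have skew: "transpose Q ** dQ h + transpose (dQ h) ** Q = 0" for h
    using has_derivative_unique[OF dQQ dQQ0] by meson
  have udR: "upper_triangular (dR h)" for h
    unfolding upper_triangular_def
  proof (intro allI impI)
    fix i j :: 'n assume ji: "j < i"
    have bl: "bounded_linear (\<lambda>M::real^('n::{finite,linorder})^('n::{finite,linorder}). M $ i $ j)"
      using bounded_linear_compose[OF bounded_linear_vec_nth bounded_linear_vec_nth] .
    have d1: "((\<lambda>x. Rf x $ i $ j) has_derivative (\<lambda>h. dR h $ i $ j)) (at A)"
      using bounded_linear.has_derivative[OF bl dRd] .
    have d0: "((\<lambda>x. Rf x $ i $ j) has_derivative (\<lambda>h. 0)) (at A)"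
      by (rule has_derivative_transform_within_open[OF has_derivative_const[of 0] oS AS])
        (use hS ji in \<open>auto simp: upper_triangular_def\<close>)
    show "dR h $ i $ j = 0" using has_derivative_unique[OF d1 d0] by meson
  qed
  have "rank R = CARD('n)"
    using assms(2) rank_mul_le_right[of Q R] rank_bound[of R] unfolding QR by linarith
  then have dR0: "det R \<noteq> 0" using det_eq_0_rank[of R] by simp
  then have "invertible R" using invertible_det_nz by blast
  then have inv: "R ** matrix_inv R = mat 1 \<and> matrix_inv R ** R = mat 1"
    unfolding invertible_def matrix_inv_def by (rule someI_ex)
  have uRi: "upper_triangular (matrix_inv R)"
    using upper_inv[OF UR _ dR0] inv by blast
  show ?thesis
    unfolding Let_def Q_def[symmetric] R_def[symmetric]
  proof (intro allI)
    fix h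
    have "h = Q ** dR h + dQ h ** R" using fun_cong[OF dAeq, of h] by simp
    then have "trace (transpose ((Qbar + Q ** copyltu (R ** transpose Rbar - transpose Qbar ** Q)) ** transpose (matrix_inv R)) ** h)
      = trace (transpose ((Qbar + Q ** copyltu (R ** transpose Rbar - transpose Qbar ** Q)) ** transpose (matrix_inv R)) ** (Q ** dR h + dQ h ** R))"
      by simp
    also have "\<dots> = trace (transpose Qbar ** dQ h) + trace (transpose Rbar ** dR h)"
      using alg[OF QQ conjunct1[OF inv] conjunct2[OF inv] skew udR uRi] .
    finally show "trace (transpose ((Qbar + Q ** copyltu (R ** transpose Rbar - transpose Qbar ** Q)) ** transpose (matrix_inv R)) ** h)
      = trace (transpose Qbar ** dQ h) + trace (transpose Rbar ** dR h)" .
  qed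
qed

end
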